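(* Let $d\in\mathcal{S}G$. The $2$-quasi-abelian code $\mathfrak{C}_{1,d}$ over $\mathcal{S}$ is Hermitian LCD if and only if $\pi(\mathfrak{C}_{1,d})=\mathcal{C}_{1,\pi(d)}$ is a Hermitian LCD $2$-quasi-abelian code over $\mathbb{F}$.
   Context: Let $\mathcal{S}|\mathcal{R}$ be a Galois extension of degree $2$ of finite commutative chain rings, $\mathbf{m}$ the maximal ideal of $\mathcal{S}$, with residue fields $\mathcal{S}/\mathbf{m}=\mathbb{F}=\mathbb{F}_{q^2}$ and $\mathbb{F}_q$ for $\mathcal{R}$; let $\sigma$ generate $\mathrm{Aut}_{\mathcal{R}}(\mathcal{S})$ (order 2). Let $G$ be a finite abelian group of odd order $n$ with $\gcd(n,q)=1$. The Hermitian form on $(\mathcal{S}G)^2$ is $\langle(a_1,b_1),(a_2,b_2)\rangle_H=\sum_g a_{1,g}\sigma(a_{2,g})+\sum_g b_{1,g}\sigma(b_{2,g})$; on $(\mathbb{F}G)^2$ the Hermitian form is $\sum_g a_{1,g}a_{2,g}^q+\sum_g b_{1,g}b_{2,g}^q$. A $2$-quasi-abelian code over $\mathcal{S}$ (resp. $\mathbb{F}$) is an $\mathcal{S}G$- (resp. $\mathbb{F}G$-)submodule of $(\mathcal{S}G)^2$ (resp. $(\mathbb{F}G)^2$); it is Hermitian LCD if it meets its Hermitian dual only in $0$. $\mathfrak{C}_{c,d}=\{(uc,ud):u\in\mathcal{S}G\}$ and $\mathcal{C}_{a,b}=\{(sa,sb):s\in\mathbb{F}G\}$. The map $\pi:\mathcal{S}G\to\mathbb{F}G$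 reduces coefficients modulo $\mathbf{m}$, applied componentwise on $(\mathcal{S}G)^2$. *)

theory Defs
  imports Main "HOL-Computational_Algebra.Primes"
begin

definition ideal_in :: "'a::comm_ring_1 set \<Rightarrow> 'a set \<Rightarrow> bool" where
  "ideal_in A I \<longleftrightarrow> I \<subseteq> A \<and> 0 \<in> I \<and> (\<forall>x\<in>I. \<forall>y\<in>I. x + y \<in> I \<and> x - y \<in> I)
     \<and> (\<forall>r\<in>A. \<forall>x\<in>I. r * x \<in> I)"

definition subring :: "'a::comm_ring_1 set \<Rightarrow> bool" where
  "subring A \<longleftrightarrow> 0 \<in> A \<and> 1 \<in> A \<and> (\<forall>x\<in>A. \<forall>y\<in>A. x + y \<in> A \<and> x - y \<in> A \<and> x * y \<in> A)"

definition chain_ring_on :: "'a::comm_ring_1 set \<Rightarrow> bool" where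
  "chain_ring_on A \<longleftrightarrow> subring A \<and> finite A \<and> (0::'a) \<noteq> 1 \<and>
     (\<forall>I J. ideal_in A I \<and> ideal_in A J \<longrightarrow> I \<subseteq> J \<or> J \<subseteq> I)"

definition maximal_ideal_in :: "'a::comm_ring_1 set \<Rightarrow> 'a set \<Rightarrow> bool" where
  "maximal_ideal_in A M \<longleftrightarrow> ideal_in A M \<and> M \<noteq> A \<and>
     (\<forall>J. ideal_in A J \<and> M \<subseteq> J \<longrightarrow> J = M \<or> J = A)"

definition ring_hom_fun :: "('a::comm_ring_1 \<Rightarrow> 'b::comm_ring_1) \<Rightarrow> bool" where
  "ring_hom_fun f \<longleftrightarrow> (\<forall>x y. f (x + y) = f x + f y \<and> f (x * y) = f x * f y) \<and> f 1 = 1"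

definition ring_aut :: "('a::comm_ring_1 \<Rightarrow> 'a) \<Rightarrow> bool" where
  "ring_aut f \<longleftrightarrow> ring_hom_fun f \<and> bij f"

definition Aut_over :: "'a::comm_ring_1 set \<Rightarrow> ('a \<Rightarrow> 'a) set" where
  "Aut_over R = {f. ring_aut f \<and> (\<forall>r\<in>R. f r = r)}"

(* Group algebra A G, G a finite abelian group written additively:
   elements are functions 'g => 'a, product is convolution. *)
definition conv :: "('g::{ab_group_add,finite} \<Rightarrow> 'a::comm_ring_1) \<Rightarrow> ('g \<Rightarrow> 'a) \<Rightarrow> 'g \<Rightarrow> 'a" where
  "conv u v = (\<lambda>g. \<Sum>h\<in>UNIV. u h * v (g - h))"

definition qa_code :: "('g::{ab_group_add,finite} \<Rightarrow> 'a::comm_ring_1) \<Rightarrow> ('g \<Rightarrow> 'a) \<Rightarrow> (('g \<Rightarrow> 'a) \<times> ('g \<Rightarrow> 'a)) set" where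
  "qa_code c d = {(conv u c, conv u d) | u. True}"

definition herm :: "('a::comm_ring_1 \<Rightarrow> 'a) \<Rightarrow> ('g::finite \<Rightarrow> 'a) \<times> ('g \<Rightarrow> 'a) \<Rightarrow> ('g \<Rightarrow> 'a) \<times> ('g \<Rightarrow> 'a) \<Rightarrow> 'a" where
  "herm cj x y = (\<Sum>g\<in>UNIV. fst x g * cj (fst y g)) + (\<Sum>g\<in>UNIV. snd x g * cj (snd y g))"

definition herm_dual :: "('a::comm_ring_1 \<Rightarrow> 'a) \<Rightarrow> (('g::finite \<Rightarrow> 'a) \<times> ('g \<Rightarrow> 'a)) set \<Rightarrow> (('g \<Rightarrow> 'a) \<times> ('g \<Rightarrow> 'a)) set" where
  "herm_dual cj C = {y. \<forall>x\<in>C. herm cj x y = 0}"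

definition herm_LCD :: "('a::comm_ring_1 \<Rightarrow> 'a) \<Rightarrow> (('g::finite \<Rightarrow> 'a) \<times> ('g \<Rightarrow> 'a)) set \<Rightarrow> bool" where
  "herm_LCD cj C \<longleftrightarrow> C \<inter> herm_dual cj C = {((\<lambda>_. 0), (\<lambda>_. 0))}"

definition red_pair :: "('s \<Rightarrow> 'f) \<Rightarrow> ('g \<Rightarrow> 's) \<times> ('g \<Rightarrow> 's) \<Rightarrow> ('g \<Rightarrow> 'f) \<times> ('g \<Rightarrow> 'f)" where
  "red_pair p x = (p \<circ> fst x, p \<circ> snd x)"

end

theory Submission
  imports Defs "HOL-Number_Theory.Cong" "HOL-Computational_Algebra.Polynomial"
begin

abbreviation dl :: "'g::{ab_group_add,finite} \<Rightarrow> 'a::comm_ring_1" where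
  "dl \<equiv> (\<lambda>g. if g = 0 then 1 else 0)"

lemma conv_comm: "conv u v = conv v u"
proof (rule ext)
  fix g
  show "conv u v g = conv v u g"
    unfolding conv_def
    by (rule sum.reindex_bij_witness[of _ "\<lambda>k. g - k" "\<lambda>k. g - k"]) (auto simp: mult.commute)
qed

lemma conv_assoc: "conv (conv u v) w = conv u (conv v w)"
proof (rule ext)
  fix g
  have "conv (conv u v) w g = (\<Sum>h\<in>UNIV. \<Sum>k\<in>UNIV. u k * v (h - k) * w (g - h))"
    unfolding conv_def by (simp add: sum_distrib_right)
  also have "\<dots> = (\<Sum>k\<in>UNIV. \<Sum>h\<in>UNIV. u k * v (h - k) * w (g - h))"
    by (rule sum.swap)
  also have "\<dots> = (\<Sum>k\<in>UNIV. \<Sum>j\<in>UNIV. u k * v j * w (g - k - j))"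
  proof (rule sum.cong[OF refl])
    fix k
    show "(\<Sum>h\<in>UNIV. u k * v (h - k) * w (g - h)) = (\<Sum>j\<in>UNIV. u k * v j * w (g - k - j))"
      by (rule sum.reindex_bij_witness[of _ "\<lambda>j. j + k" "\<lambda>h. h - k"]) (auto simp: algebra_simps)
  qed
  also have "\<dots> = conv u (conv v w) g"
    unfolding conv_def by (simp add: sum_distrib_left mult.assoc)
  finally show "conv (conv u v) w g = conv u (conv v w) g" .
qed

lemma conv_dl_right: "conv u dl = u"
proof (rule ext)
  fix g
  have "conv u dl g = (\<Sum>h\<in>UNIV. if h = g then u h else 0)"
    unfolding conv_def by (rule sum.cong) auto
  also have "\<dots> = u g" by simp
  finally show "conv u dl g = u g" .
qed

lemma conv_dl_left: "conv dl u = u"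
  using conv_dl_right conv_comm by metis

lemma conv_zero_left: "conv (\<lambda>_. 0) u = (\<lambda>_. 0)"
  unfolding conv_def by simp

lemma conv_zero_right: "conv u (\<lambda>_. 0) = (\<lambda>_. 0)"
  unfolding conv_def by simp

lemma conv_add_right: "conv u (\<lambda>g. v g + w g) = (\<lambda>g. conv u v g + conv u w g)"
  unfolding conv_def by (simp add: algebra_simps sum.distrib)

lemma conv_diff_right: "conv u (\<lambda>g. v g - w g) = (\<lambda>g. conv u v g - conv u w g)"
  unfolding conv_def by (simp add: algebra_simps sum_subtractf)

lemma conv_smult_left: "conv (\<lambda>g. c * u g) v = (\<lambda>g. c * conv u v g)"
  unfolding conv_def by (simp add: sum_distrib_left mult.assoc)

lemma hom_sum:
  fixes f :: "'a::comm_monoid_add \<Rightarrow> 'b::ab_group_add"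
  assumes "\<And>x y. f (x + y) = f x + f y"
  shows "f (sum h A) = (\<Sum>a\<in>A. f (h a))"
proof -
  have f0: "f 0 = 0" using assms[of 0 0] by (metis add_cancel_right_right add_0)
  show ?thesis
    by (induction A rule: infinite_finite_induct) (auto simp: f0 assms)
qed

lemma conv_hom:
  fixes f :: "'a::comm_ring_1 \<Rightarrow> 'b::comm_ring_1"
  assumes "\<And>x y. f (x + y) = f x + f y" "\<And>x y. f (x * y) = f x * f y"
  shows "f \<circ> conv u v = conv (f \<circ> u) (f \<circ> v)"
  unfolding conv_def comp_def
  by (rule ext) (simp add: hom_sum[of f, OF assms(1)] assms(2))

definition adj :: "('a \<Rightarrow> 'a) \<Rightarrow> ('g::ab_group_add \<Rightarrow> 'a) \<Rightarrow> 'g \<Rightarrow> 'a" where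
  "adj cj a = (\<lambda>g. cj (a (- g)))"

locale invol =
  fixes cj :: "'a::comm_ring_1 \<Rightarrow> 'a"
  assumes cj_add: "\<And>x y. cj (x + y) = cj x + cj y"
    and cj_mult: "\<And>x y. cj (x * y) = cj x * cj y"
    and cj_cj: "\<And>x. cj (cj x) = x"
begin

lemma cj_0: "cj 0 = 0"
  using cj_add[of 0 0] by (metis add_cancel_right_right add_0)

lemma cj_sum: "cj (sum h A) = (\<Sum>a\<in>A. cj (h a))"
  by (rule hom_sum) (rule cj_add)

lemma cj_eq0: "cj x = 0 \<longleftrightarrow> x = 0"
  by (metis cj_0 cj_cj)

lemma herm_adj:
  fixes u a w :: "'g::{ab_group_add,finite} \<Rightarrow> 'a"
  shows "(\<Sum>g\<in>UNIV. conv u a g * cj (w g)) = (\<Sum>h\<in>UNIV. u h * cj (conv w (adj cj a) h))"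
proof -
  have "(\<Sum>g\<in>UNIV. conv u a g * cj (w g)) = (\<Sum>g\<in>UNIV. \<Sum>h\<in>UNIV. u h * a (g - h) * cj (w g))"
    unfolding conv_def by (simp add: sum_distrib_right)
  also have "\<dots> = (\<Sum>h\<in>UNIV. \<Sum>g\<in>UNIV. u h * a (g - h) * cj (w g))"
    by (rule sum.swap)
  also have "\<dots> = (\<Sum>h\<in>UNIV. u h * cj (conv w (adj cj a) h))"
  proof (rule sum.cong[OF refl])
    fix h
    have "cj (conv w (adj cj a) h) = (\<Sum>k\<in>UNIV. cj (w k) * a (k - h))"
      unfolding conv_def adj_def cj_sum by (simp add: cj_mult cj_cj)
    then show "(\<Sum>g\<in>UNIV. u h * a (g - h) * cj (w g)) = u h * cj (conv w (adj cj a) h)"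
      by (simp add: sum_distrib_left mult_ac)
  qed
  finally show ?thesis .
qed

lemma herm_code:
  fixes u v d :: "'g::{ab_group_add,finite} \<Rightarrow> 'a"
  shows "herm cj (u, conv u d) (v, conv v d) =
     (\<Sum>h\<in>UNIV. u h * cj (conv v (\<lambda>g. dl g + conv d (adj cj d) g) h))"
proof -
  have "herm cj (u, conv u d) (v, conv v d) =
     (\<Sum>h\<in>UNIV. u h * cj (v h)) + (\<Sum>h\<in>UNIV. u h * cj (conv (conv v d) (adj cj d) h))"
    unfolding herm_def by (simp add: herm_adj)
  also have "\<dots> = (\<Sum>h\<in>UNIV. u h * cj (v h + conv (conv v d) (adj cj d) h))"
    by (simp add: cj_add sum.distrib distrib_left)
  also have "\<dots> = (\<Sum>h\<in>UNIV. u h * cj (conv v (\<lambda>g. dl g + conv d (adj cj d) g) h))"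
    by (simp only: conv_add_right conv_dl_right conv_assoc)
  finally show ?thesis .
qed

lemma qa_code_dl: "qa_code dl d = {(u, conv u d) | u. True}"
  unfolding qa_code_def by (simp add: conv_dl_right)

lemma LCD_iff:
  fixes d :: "'g::{ab_group_add,finite} \<Rightarrow> 'a"
  shows "herm_LCD cj (qa_code dl d) \<longleftrightarrow>
    (\<forall>v. conv v (\<lambda>g. dl g + conv d (adj cj d) g) = (\<lambda>_. 0) \<longrightarrow> v = (\<lambda>_. 0))"
    (is "_ \<longleftrightarrow> (\<forall>v. conv v ?E = _ \<longrightarrow> _)")
proof -
  have key: "(\<forall>u. (\<Sum>h\<in>UNIV. u h * cj (W h)) = 0) \<longleftrightarrow> W = (\<lambda>_. 0)" for W :: "'g \<Rightarrow> 'a"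
  proof
    assume A: "\<forall>u. (\<Sum>h\<in>UNIV. u h * cj (W h)) = 0"
    show "W = (\<lambda>_. 0)"
    proof (rule ext)
      fix h0
      have "(\<Sum>h\<in>UNIV. (if h = h0 then 1 else 0) * cj (W h)) = 0" by (rule A[THEN spec])
      moreover have "(\<Sum>h\<in>UNIV. (if h = h0 then 1 else 0) * cj (W h)) = (\<Sum>h\<in>UNIV. if h = h0 then cj (W h) else 0)"
        by (rule sum.cong) auto
      ultimately have "cj (W h0) = 0"
        by simp
      then show "W h0 = 0" by (simp add: cj_eq0)
    qed
  qed (simp add: cj_0)
  have inter: "qa_code dl d \<inter> herm_dual cj (qa_code dl d) =
     {(v, conv v d) | v. conv v ?E = (\<lambda>_. 0)}"
  proof -
    have "(v, conv v d) \<in> herm_dual cj (qa_code dl d) \<longleftrightarrow> conv v ?E = (\<lambda>_. 0)" for v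
    proof -
      have "(v, conv v d) \<in> herm_dual cj (qa_code dl d) \<longleftrightarrow> (\<forall>u. herm cj (u, conv u d) (v, conv v d) = 0)"
        unfolding herm_dual_def qa_code_dl by blast
      also have "\<dots> \<longleftrightarrow> (\<forall>u. (\<Sum>h\<in>UNIV. u h * cj (conv v ?E h)) = 0)"
        by (simp only: herm_code)
      also have "\<dots> \<longleftrightarrow> conv v ?E = (\<lambda>_. 0)" by (rule key)
      finally show ?thesis .
    qed
    then show ?thesis unfolding qa_code_dl by blast
  qed
  show ?thesis
  proof
    assume L: "herm_LCD cj (qa_code dl d)"
    show "\<forall>v. conv v ?E = (\<lambda>_. 0) \<longrightarrow> v = (\<lambda>_. 0)"
    proof (intro allI impI)
      fix v assume "conv v ?E = (\<lambda>_. 0)"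
      then have "(v, conv v d) \<in> qa_code dl d \<inter> herm_dual cj (qa_code dl d)"
        unfolding inter by blast
      then show "v = (\<lambda>_. 0)" using L unfolding herm_LCD_def by auto
    qed
  next
    assume R: "\<forall>v. conv v ?E = (\<lambda>_. 0) \<longrightarrow> v = (\<lambda>_. 0)"
    have "{(v, conv v d) | v. conv v ?E = (\<lambda>_. 0)} = {((\<lambda>_. 0), (\<lambda>_. 0))}"
      using R by (auto simp: conv_zero_left conv_zero_right)
    then show "herm_LCD cj (qa_code dl d)"
      unfolding herm_LCD_def inter .
  qed
qed

end

lemma inj_unit_iff:
  fixes E :: "'g::{ab_group_add,finite} \<Rightarrow> 'a::{comm_ring_1,finite}"
  shows "(\<forall>v. conv v E = (\<lambda>_. 0) \<longrightarrow> v = (\<lambda>_. 0)) \<longleftrightarrow> (\<exists>w. conv E w = dl)"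
proof
  assume A: "\<forall>v. conv v E = (\<lambda>_. 0) \<longrightarrow> v = (\<lambda>_. 0)"
  have "inj (\<lambda>v. conv v E)"
  proof (rule injI)
    fix x y assume "conv x E = conv y E"
    have "conv (\<lambda>g. x g - y g) E = conv E (\<lambda>g. x g - y g)" by (rule conv_comm)
    also have "\<dots> = (\<lambda>g. conv E x g - conv E y g)" by (rule conv_diff_right)
    also have "\<dots> = (\<lambda>g. conv x E g - conv y E g)" by (simp only: conv_comm[of E x] conv_comm[of E y])
    also have "\<dots> = (\<lambda>_. 0)" using \<open>conv x E = conv y E\<close> by simp
    finally have "conv (\<lambda>g. x g - y g) E = (\<lambda>_. 0)" .
    then have "(\<lambda>g. x g - y g) = (\<lambda>_. 0)" using A by blast
    then show "x = y" by (auto simp: fun_eq_iff)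
  qed
  then have "surj (\<lambda>v. conv v E)" by (rule finite_UNIV_inj_surj[OF finite_UNIV])
  from surjD[OF this, of dl] obtain w where "dl = conv w E" by blast
  then have "conv E w = dl" by (simp add: conv_comm[of E w])
  then show "\<exists>w. conv E w = dl" by blast
next
  assume "\<exists>w. conv E w = dl"
  then obtain w where w: "conv E w = dl" by blast
  show "\<forall>v. conv v E = (\<lambda>_. 0) \<longrightarrow> v = (\<lambda>_. 0)"
  proof (intro allI impI)
    fix v assume "conv v E = (\<lambda>_. 0)"
    then have "conv (conv v E) w = (\<lambda>_. 0)" by (simp add: conv_zero_left)
    then show "v = (\<lambda>_. 0)" by (simp add: conv_assoc w conv_dl_right)
  qed
qed

lemma fld_pow_card:
  fixes A :: "'f::field set"
  assumes fin: "finite A" and z: "0 \<in> A" and cl: "\<forall>x\<in>A. \<forall>y\<in>A. x*y \<in> A" and y: "y \<in> A"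
  shows "y ^ card A = y"
proof (cases "y = 0")
  case True
  have "card A > 0" using fin z by (auto simp: card_gt_0_iff)
  then show ?thesis using True by simp
next
  case False
  let ?B = "A - {0}"
  have finB: "finite ?B" using fin by simp
  have img: "(\<lambda>x. y * x) ` ?B = ?B"
  proof (rule endo_inj_surj[OF finB])
    show "(\<lambda>x. y * x) ` ?B \<subseteq> ?B" using cl y False by auto
    show "inj_on (\<lambda>x. y * x) ?B" using False by (auto simp: inj_on_def)
  qed
  have "prod (\<lambda>x. x) ?B = prod (\<lambda>x. x) ((\<lambda>x. y * x) ` ?B)" using img by simp
  also have "\<dots> = prod (\<lambda>x. y * x) ?B"
    by (subst prod.reindex) (use False in \<open>auto simp: inj_on_def\<close>)
  also have "\<dots> = y ^ card ?B * prod (\<lambda>x. x) ?B"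
    by (simp add: prod.distrib)
  finally have eq: "prod (\<lambda>x. x) ?B = y ^ card ?B * prod (\<lambda>x. x) ?B" .
  have "prod (\<lambda>x. x) ?B \<noteq> 0" using finB by (simp add: prod_zero_iff)
  then have "y ^ card ?B = 1" using eq by (metis mult_cancel_right1)
  moreover have "card A = Suc (card ?B)" using fin z
    by (metis card_Diff1_less card_Suc_Diff1)
  ultimately show ?thesis by simp
qed

lemma roots_card_le:
  assumes "q \<ge> 2"
  shows "card {x::'f::field. x ^ q = x} \<le> q"
proof -
  define P :: "'f poly" where "P = monom 1 q - [:0, 1:]"
  have cq: "coeff P q = 1" using assms by (simp add: P_def coeff_pCons split: nat.split)
  then have "P \<noteq> 0" by auto
  have dP: "degree P \<le> q"
    unfolding P_def by (rule order.trans[OF degree_diff_le_max]) (use assms in \<open>auto simp: degree_monom_eq\<close>)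
  have "{x::'f. x ^ q = x} = {x. poly P x = 0}"
    by (auto simp: P_def poly_monom)
  then show ?thesis using card_poly_roots_bound[OF \<open>P \<noteq> 0\<close>] dP by simp
qed

lemma of_nat_mod_CHAR: "(of_nat n :: 'a::comm_semiring_1) = of_nat (n mod CHAR('a))"
proof -
  have "(of_nat n :: 'a) = of_nat (n mod CHAR('a) + CHAR('a) * (n div CHAR('a)))" by simp
  also have "\<dots> = of_nat (n mod CHAR('a))" by (simp only: of_nat_add of_nat_mult of_nat_CHAR) simp
  finally show ?thesis .
qed

lemma CHAR_prime_ff: "prime CHAR('f::{field,finite})"
  by (rule prime_CHAR_semidom) (rule finite_imp_CHAR_pos[OF finite_UNIV])

definition sg :: "'a::ring_1 set \<Rightarrow> bool" where
  "sg B \<longleftrightarrow> 0 \<in> B \<and> (\<forall>x\<in>B. \<forall>y\<in>B. x + y \<in> B)"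

lemma sg_nat_mult: "sg B \<Longrightarrow> x \<in> B \<Longrightarrow> of_nat n * x \<in> B"
  by (induction n) (auto simp: sg_def distrib_right)

lemma sg_neg:
  assumes "sg B" "x \<in> B" "CHAR('a) > 0"
  shows "- (x::'a::ring_1) \<in> B"
proof -
  have "of_nat (CHAR('a) - 1) * x + x = of_nat CHAR('a) * x"
    using assms(3) by (simp add: distrib_right of_nat_diff)
  also have "\<dots> = 0" by simp
  finally have "- x = of_nat (CHAR('a) - 1) * x" by (metis add.commute add.inverse_unique)
  then show ?thesis using sg_nat_mult[OF assms(1,2)] by simp
qed

lemma sg_ext:
  fixes B :: "'f::{field,finite} set"
  assumes sgB: "sg B" and a: "a \<notin> B"
  defines "B' \<equiv> (\<lambda>(b,j). b + of_nat j * a) ` (B \<times> {..<CHAR('f)})"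
  shows "sg B' \<and> B \<subset> B' \<and> card B' = card B * CHAR('f)"
proof -
  let ?c = "CHAR('f)"
  have pc: "prime ?c" by (rule CHAR_prime_ff)
  then have c2: "?c \<ge> 2" by (rule prime_ge_2_nat)
  have cpos: "?c > 0" using c2 by simp
  have "sg B'"
    unfolding sg_def
  proof (intro conjI ballI)
    show "0 \<in> B'" unfolding B'_def using sgB cpos
      by (intro rev_image_eqI[of "(0,0)"]) (auto simp: sg_def)
    fix x y assume "x \<in> B'" "y \<in> B'"
    then obtain b j b' j' where bj: "b \<in> B" "j < ?c" "x = b + of_nat j * a"
      and bj': "b' \<in> B" "j' < ?c" "y = b' + of_nat j' * a" unfolding B'_def by auto
    have md: "(of_nat ((j + j') mod ?c) :: 'f) = of_nat (j + j')" by (rule of_nat_mod_CHAR[symmetric])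
    have "x + y = (b + b') + of_nat ((j + j') mod ?c) * a"
      using bj bj' unfolding md by (simp add: algebra_simps)
    moreover have "b + b' \<in> B" using sgB bj bj' by (auto simp: sg_def)
    moreover have "(j + j') mod ?c < ?c" using cpos by simp
    ultimately show "x + y \<in> B'" unfolding B'_def by (auto simp: image_iff)
  qed
  have sub: "B \<subseteq> B'" unfolding B'_def using cpos
  proof (intro subsetI)
    fix x assume "x \<in> B"
    then show "x \<in> (\<lambda>(b,j). b + of_nat j * a) ` (B \<times> {..<?c})"
      using cpos by (intro rev_image_eqI[of "(x,0)"]) auto
  qed
  have "a \<in> B'" unfolding B'_def using sgB c2
    by (intro rev_image_eqI[of "(0,1)"]) (auto simp: sg_def)
  then have psub: "B \<subset> B'" using sub a by blast
  have noteq: False if "j < j'" "j' < ?c" "b \<in> B" "b' \<in> B" "b + of_nat j * a = b' + of_nat j' * a" for b b' j j'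
  proof -
    define e where "e = j' - j"
    have e: "0 < e" "e < ?c" using that by (auto simp: e_def)
    have "of_nat j' = (of_nat j + of_nat e :: 'f)" using that by (simp add: e_def of_nat_diff)
    then have "b - b' = of_nat e * a" using that(5) by (simp add: algebra_simps)
    moreover have "b - b' \<in> B" using sgB that(3,4) sg_neg[OF sgB that(4) cpos] by (auto simp: sg_def)
    ultimately have eB: "of_nat e * a \<in> B" by simp
    have "coprime e ?c"
      using e pc by (metis coprime_commute nat_dvd_not_less prime_imp_coprime)
    then obtain x where x: "[e * x = Suc 0] (mod ?c)" using cong_solve_coprime_nat by blast
    have "(of_nat x * of_nat e :: 'f) = of_nat ((e * x) mod ?c)"
      by (simp add: of_nat_mod_CHAR[of "e * x", symmetric] mult.commute)
    also have "\<dots> = 1" using x c2 by (simp add: cong_def)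
    finally have "of_nat x * (of_nat e * a) = a" by (simp flip: mult.assoc)
    then have "a \<in> B" using sg_nat_mult[OF sgB eB, of x] by metis
    then show False using a by blast
  qed
  have "inj_on (\<lambda>(b,j). b + of_nat j * a) (B \<times> {..<?c})"
  proof (rule inj_onI, clarify)
    fix b j b' j'
    assume h: "b \<in> B" "j < ?c" "b' \<in> B" "j' < ?c" "b + of_nat j * a = b' + of_nat j' * a"
    have "j = j'"
    proof (rule ccontr)
      assume "j \<noteq> j'"
      then consider "j < j'" | "j' < j" by linarith
      then show False
        using noteq[of j j' b b'] noteq[of j' j b' b] h by (cases; metis)
    qed
    then show "b = b' \<and> j = j'" using h by simp
  qed
  then have "card B' = card (B \<times> {..<?c})" unfolding B'_def by (rule card_image)
  also have "\<dots> = card B * ?c" by (simp add: card_cartesian_product)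
  finally show ?thesis using \<open>sg B'\<close> psub by blast
qed

lemma card_CHAR_power: "\<exists>k. card (UNIV :: 'f::{field,finite} set) = CHAR('f) ^ k"
proof -
  have main: "\<forall>B::'f set. sg B \<and> card (UNIV - B) = n \<and> (\<exists>k. card B = CHAR('f) ^ k) \<longrightarrow>
     (\<exists>k. card (UNIV :: 'f set) = CHAR('f) ^ k)" for n
  proof (induction n rule: less_induct)
    case (less n)
    show ?case
    proof (intro allI impI, elim conjE exE)
      fix B :: "'f set" and k assume sgB: "sg B" and n: "card (UNIV - B) = n" and k: "card B = CHAR('f) ^ k"
      show "\<exists>k. card (UNIV :: 'f set) = CHAR('f) ^ k"
      proof (cases "B = UNIV")
        case True then show ?thesis using k by auto
      next
        case False
        then obtain a where a: "a \<notin> B" by blast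
        define B' where "B' = (\<lambda>(b,j). b + of_nat j * a) ` (B \<times> {..<CHAR('f)})"
        have ext: "sg B' \<and> B \<subset> B' \<and> card B' = card B * CHAR('f)"
          unfolding B'_def by (rule sg_ext[OF sgB a])
        have "card (UNIV - B') < card (UNIV - B)"
          using ext by (intro psubset_card_mono) auto
        moreover have "card B' = CHAR('f) ^ Suc k" using ext k by simp
        ultimately show ?thesis using less.IH[of "card (UNIV - B')"] ext n by blast
      qed
    qed
  qed
  have "sg {0::'f}" by (simp add: sg_def)
  moreover have "card {0::'f} = CHAR('f) ^ 0" by simp
  ultimately show ?thesis using main by blast
qed

primrec cpow :: "('g::{ab_group_add,finite} \<Rightarrow> 'a::comm_ring_1) \<Rightarrow> nat \<Rightarrow> 'g \<Rightarrow> 'a" where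
  "cpow z 0 = dl"
| "cpow z (Suc n) = conv z (cpow z n)"

lemma conv_smult_right: "conv u (\<lambda>g. c * v g) = (\<lambda>g. c * conv u v g)"
proof -
  have "conv u (\<lambda>g. c * v g) = conv (\<lambda>g. c * v g) u" by (rule conv_comm)
  also have "\<dots> = (\<lambda>g. c * conv v u g)" by (rule conv_smult_left)
  finally show ?thesis by (simp only: conv_comm[of v u])
qed

lemma cpow_smult: "cpow (\<lambda>g. c * z g) n = (\<lambda>g. c ^ n * cpow z n g)"
proof (induction n)
  case 0 then show ?case by simp
next
  case (Suc n)
  have "cpow (\<lambda>g. c * z g) (Suc n) = conv (\<lambda>g. c * z g) (\<lambda>g. c ^ n * cpow z n g)"
    using Suc by simp
  also have "\<dots> = (\<lambda>g. c * (c ^ n * conv z (cpow z n) g))"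
    by (simp only: conv_smult_left conv_smult_right)
  finally show ?case by (simp add: mult.assoc)
qed

lemma cpow_fix: "v = conv v z \<Longrightarrow> v = conv v (cpow z n)"
proof (induction n)
  case 0 then show ?case by (simp add: conv_dl_right)
next
  case (Suc n)
  have "conv v (cpow z (Suc n)) = conv (conv v z) (cpow z n)" by (simp add: conv_assoc)
  also have "\<dots> = conv v (cpow z n)" using Suc.prems by simp
  finally show ?case using Suc by simp
qed

lemma hom_diff:
  fixes f :: "'a::ab_group_add \<Rightarrow> 'b::ab_group_add"
  assumes "\<And>x y. f (x + y) = f x + f y"
  shows "f (x - y) = f x - f y"
  using assms[of "x - y" y] by (simp add: eq_diff_eq)

locale setting =
  fixes \<sigma> :: "'s::{comm_ring_1,finite} \<Rightarrow> 's"
    and m :: "'s set"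
    and p :: "'s \<Rightarrow> 'f::{field,finite}"
    and q :: nat
  assumes S_chain: "chain_ring_on (UNIV :: 's set)"
    and m_max: "maximal_ideal_in UNIV m"
    and Aut: "Aut_over {r. \<sigma> r = r} = {id, \<sigma>}" and sigma_nontriv: "\<sigma> \<noteq> id"
    and Galois: "\<exists>s. \<sigma> s - s \<notin> m"
    and p_hom: "ring_hom_fun p" and p_surj: "surj p"
    and p_ker: "\<forall>x. p x = 0 \<longleftrightarrow> x \<in> m"
    and F_card: "card (UNIV :: 'f set) = q ^ 2"
    and R_res_card: "card (p ` {r. \<sigma> r = r}) = q"
begin

lemma sig_aut: "ring_aut \<sigma>" using Aut unfolding Aut_over_def by blast

lemma sig_add: "\<sigma> (x + y) = \<sigma> x + \<sigma> y" and sig_mult: "\<sigma> (x * y) = \<sigma> x * \<sigma> y"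
  and sig_1: "\<sigma> 1 = 1" and sig_bij: "bij \<sigma>"
  using sig_aut unfolding ring_aut_def ring_hom_fun_def by auto

lemma sig_0: "\<sigma> 0 = 0" using sig_add[of 0 0] by simp

lemma sig_diff: "\<sigma> (x - y) = \<sigma> x - \<sigma> y" by (rule hom_diff) (rule sig_add)

lemma sig_inj: "\<sigma> x = \<sigma> y \<Longrightarrow> x = y" using sig_bij by (auto simp: bij_def inj_def)

lemma sig_sig: "\<sigma> (\<sigma> x) = x"
proof -
  have "\<sigma> \<circ> \<sigma> \<in> Aut_over {r. \<sigma> r = r}"
    unfolding Aut_over_def ring_aut_def ring_hom_fun_def
    using sig_add sig_mult sig_1 bij_comp[OF sig_bij sig_bij] by auto
  then have "\<sigma> \<circ> \<sigma> = id \<or> \<sigma> \<circ> \<sigma> = \<sigma>" using Aut by blast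
  moreover have "\<sigma> \<circ> \<sigma> \<noteq> \<sigma>"
  proof
    assume "\<sigma> \<circ> \<sigma> = \<sigma>"
    then have "\<sigma> y = y" for y using sig_inj[of "\<sigma> y" y] by (metis comp_apply)
    then show False using sigma_nontriv by auto
  qed
  ultimately show ?thesis by (metis comp_apply id_apply)
qed

lemma p_add: "p (x + y) = p x + p y" and p_mult: "p (x * y) = p x * p y" and p_1: "p 1 = 1"
  using p_hom unfolding ring_hom_fun_def by auto

lemma p_0: "p 0 = 0"
proof -
  have "p 0 + p 0 = p 0 + 0" using p_add[of 0 0] by simp
  then show ?thesis by (rule add_left_imp_eq)
qed
lemma p_diff: "p (x - y) = p x - p y" by (rule hom_diff) (rule p_add)

lemma m_ideal: "ideal_in UNIV m" and m_ne: "m \<noteq> UNIV"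
  and m_maxl: "\<And>J. ideal_in UNIV J \<Longrightarrow> m \<subseteq> J \<Longrightarrow> J = m \<or> J = UNIV"
  using m_max unfolding maximal_ideal_in_def by auto

lemma m_0: "0 \<in> m" and m_add: "x \<in> m \<Longrightarrow> y \<in> m \<Longrightarrow> x + y \<in> m"
  and m_diff: "x \<in> m \<Longrightarrow> y \<in> m \<Longrightarrow> x - y \<in> m" and m_mult: "x \<in> m \<Longrightarrow> r * x \<in> m"
  using m_ideal unfolding ideal_in_def by auto

lemma one_notin_m: "1 \<notin> m"
proof
  assume "1 \<in> m"
  then have "r \<in> m" for r using m_mult[of 1 r] by simp
  then show False using m_ne by auto
qed

lemma chain: "ideal_in UNIV (I::'s set) \<Longrightarrow> ideal_in UNIV J \<Longrightarrow> I \<subseteq> J \<or> J \<subseteq> I"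
  using S_chain unfolding chain_ring_on_def by blast

lemma principal_ideal: "ideal_in UNIV (range (\<lambda>t. x * t))"
  unfolding ideal_in_def
proof (intro conjI ballI)
  show "0 \<in> range (\<lambda>t. x * t)" by (rule range_eqI[of _ _ 0]) simp
  fix a b assume "a \<in> range (\<lambda>t. x * t)" "b \<in> range (\<lambda>t. x * t)"
  then obtain s t where st: "a = x * s" "b = x * t" by blast
  show "a + b \<in> range (\<lambda>t. x * t)" using st by (intro range_eqI[of _ _ "s + t"]) (simp add: distrib_left)
  show "a - b \<in> range (\<lambda>t. x * t)" using st by (intro range_eqI[of _ _ "s - t"]) (simp add: right_diff_distrib)
next
  fix r a assume "a \<in> range (\<lambda>t. x * t)"
  then obtain s where "a = x * s" by blast
  then show "r * a \<in> range (\<lambda>t. x * t)" by (intro range_eqI[of _ _ "r * s"]) (simp add: mult.left_commute)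
qed simp

lemma m_unit: "x \<in> m \<Longrightarrow> x * y \<noteq> 1"
  using m_mult[of x y] one_notin_m by (metis mult.commute)

lemma nonunit_m: assumes "\<forall>y. x * y \<noteq> 1" shows "x \<in> m"
proof -
  have "range (\<lambda>t. x * t) \<subseteq> m \<or> m \<subseteq> range (\<lambda>t. x * t)"
    using chain[OF principal_ideal m_ideal] by blast
  then show ?thesis
  proof
    assume "range (\<lambda>t. x * t) \<subseteq> m"
    then show ?thesis by (metis mult.right_neutral rangeI subsetD)
  next
    assume "m \<subseteq> range (\<lambda>t. x * t)"
    then have "range (\<lambda>t. x * t) = m \<or> range (\<lambda>t. x * t) = UNIV"
      using m_maxl[OF principal_ideal] by blast
    then show ?thesis
    proof
      assume "range (\<lambda>t. x * t) = m" then show ?thesis by (metis mult.right_neutral rangeI)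
    next
      assume "range (\<lambda>t. x * t) = UNIV"
      then obtain t where "1 = x * t" by (metis UNIV_I imageE)
      then show ?thesis using assms by metis
    qed
  qed
qed

lemma sig_m: assumes "x \<in> m" shows "\<sigma> x \<in> m"
proof (rule nonunit_m, intro allI notI)
  fix y assume "\<sigma> x * y = 1"
  then have "\<sigma> (\<sigma> x * y) = 1" by (simp add: sig_1)
  then have "x * \<sigma> y = 1" by (simp add: sig_mult sig_sig)
  then show False using m_unit[OF assms] by blast
qed

lemma m_nilpotent: assumes "x \<in> m" shows "\<exists>n. x ^ n = 0"
proof -
  have "\<not> inj (\<lambda>n::nat. x ^ n)"
  proof
    assume "inj (\<lambda>n::nat. x ^ n)"
    then have "finite (UNIV :: nat set)"
      using finite_imageD[of "\<lambda>n::nat. x ^ n" UNIV] finite_subset[OF subset_UNIV finite_UNIV] by blast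
    then show False by simp
  qed
  then obtain a b where ab: "a \<noteq> b" "x ^ a = x ^ b" unfolding inj_def by blast
  have "\<exists>a b. a < b \<and> x ^ a = x ^ b"
    using ab by (metis linorder_neqE_nat)
  then obtain a b where ab: "a < b" "x ^ a = x ^ b" by blast
  define e where "e = b - a"
  have "b = a + e" using ab by (simp add: e_def)
  then have e: "e > 0" "x ^ b = x ^ a * x ^ e" using ab by (auto simp: power_add)
  have "x ^ e \<in> m" using e(1) assms
    by (metis gr0_implies_Suc m_mult power_Suc mult.commute)
  then have "1 - x ^ e \<notin> m" using m_add[of "1 - x ^ e" "x ^ e"] one_notin_m by auto
  then obtain y where y: "(1 - x ^ e) * y = 1" using nonunit_m by blast
  have "x ^ a * (1 - x ^ e) = 0" using ab e by (simp add: algebra_simps)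
  then have "x ^ a * (1 - x ^ e) * y = 0" by simp
  then have "x ^ a = 0" using y by (simp add: mult.assoc)
  then show ?thesis by blast
qed

lemma m_principal: "\<exists>\<gamma>\<in>m. \<forall>y\<in>m. \<exists>t. y = \<gamma> * t"
proof -
  have "\<exists>x. x \<in> m \<and> (\<forall>y. y \<in> m \<longrightarrow> card (range (\<lambda>t. y * t)) \<le> card (range (\<lambda>t. x * t)))"
    by (rule ex_has_greatest_nat[of _ 0 _ "Suc (card (UNIV :: 's set))"])
       (auto simp: m_0 le_imp_less_Suc card_mono)
  then obtain g where g: "g \<in> m" "\<And>y. y \<in> m \<Longrightarrow> card (range (\<lambda>t. y * t)) \<le> card (range (\<lambda>t. g * t))"
    by blast
  have "\<exists>t. y = g * t" if y: "y \<in> m" for y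
  proof -
    have "range (\<lambda>t. y * t) \<subseteq> range (\<lambda>t. g * t) \<or> range (\<lambda>t. g * t) \<subseteq> range (\<lambda>t. y * t)"
      using chain[OF principal_ideal principal_ideal] by blast
    then have "range (\<lambda>t. y * t) \<subseteq> range (\<lambda>t. g * t)"
    proof
      assume "range (\<lambda>t. g * t) \<subseteq> range (\<lambda>t. y * t)"
      moreover have "card (range (\<lambda>t. y * t)) \<le> card (range (\<lambda>t. g * t))" using g(2)[OF y] .
      moreover have "card (range (\<lambda>t. g * t)) \<le> card (range (\<lambda>t. y * t))"
        using calculation(1) by (intro card_mono) auto
      ultimately have "range (\<lambda>t. g * t) = range (\<lambda>t. y * t)"
        by (intro card_subset_eq) auto
      then show ?thesis by simp
    qed
    then have "y \<in> range (\<lambda>t. g * t)" by (metis mult.right_neutral rangeI subsetD)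
    then show ?thesis by auto
  qed
  then show ?thesis using g(1) by blast
qed

lemma coeff_m_nilpotent:
  fixes z :: "'g::{ab_group_add,finite} \<Rightarrow> 's"
  assumes "\<forall>g. z g \<in> m"
  shows "\<exists>K. cpow z K = (\<lambda>_. 0)"
proof -
  obtain \<gamma> where \<gamma>: "\<gamma> \<in> m" "\<forall>y\<in>m. \<exists>t. y = \<gamma> * t" using m_principal by blast
  obtain K where K: "\<gamma> ^ K = 0" using m_nilpotent[OF \<gamma>(1)] by blast
  define z1 where "z1 = (\<lambda>g. SOME t. z g = \<gamma> * t)"
  have "z g = \<gamma> * z1 g" for g
    unfolding z1_def using \<gamma>(2) assms by (metis (mono_tags, lifting) someI_ex)
  then have "z = (\<lambda>g. \<gamma> * z1 g)" by auto
  then have "cpow z K = (\<lambda>g. \<gamma> ^ K * cpow z1 K g)" by (simp add: cpow_smult)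
  then show ?thesis using K by auto
qed

end

context setting
begin

abbreviation "K0 \<equiv> p ` {r. \<sigma> r = r}"

lemma pwd: assumes "p a = p b" shows "p (\<sigma> a) = p (\<sigma> b)"
proof -
  have "p (a - b) = 0" using assms by (simp add: p_diff)
  then have "a - b \<in> m" using p_ker by blast
  then have "\<sigma> (a - b) \<in> m" by (rule sig_m)
  then have "p (\<sigma> a - \<sigma> b) = 0" using p_ker by (simp add: sig_diff)
  then show ?thesis by (simp add: p_diff)
qed

lemma q2: "q \<ge> 2"
proof -
  have "card {0::'f, 1} \<le> card (UNIV :: 'f set)" by (rule card_mono) auto
  then have "2 \<le> q ^ 2" using F_card by simp
  then show ?thesis
    by (metis One_nat_def less_2_cases_iff not_le power_one zero_power2 Suc_1 lessI numeral_le_one_iff semiring_norm(69))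
qed

lemma K0_0: "0 \<in> K0" by (rule image_eqI[of _ _ 0]) (auto simp: p_0 sig_0)

lemma K0_mult: assumes "x \<in> K0" "y \<in> K0" shows "x * y \<in> K0"
proof -
  obtain r1 r2 where r: "\<sigma> r1 = r1" "\<sigma> r2 = r2" "x = p r1" "y = p r2" using assms by auto
  then show ?thesis by (intro image_eqI[of _ _ "r1 * r2"]) (auto simp: p_mult sig_mult)
qed

lemma K0_pow: "y \<in> K0 \<Longrightarrow> y ^ q = y"
  using fld_pow_card[of K0 y] K0_0 K0_mult R_res_card by auto

lemma roots_eq: "{x. x ^ q = x} = K0"
proof -
  have sub: "K0 \<subseteq> {x. x ^ q = x}" using K0_pow by auto
  have "card {x::'f. x ^ q = x} \<le> card K0" using roots_card_le[OF q2] R_res_card by simp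
  moreover have "card K0 \<le> card {x::'f. x ^ q = x}" using sub by (intro card_mono) auto
  ultimately show ?thesis using sub by (intro card_subset_eq[symmetric]) auto
qed

lemma psi_add: "(x + y :: 'f) ^ q = x ^ q + y ^ q"
proof -
  obtain k where k: "card (UNIV :: 'f set) = CHAR('f) ^ k" using card_CHAR_power by blast
  have "q * q = CHAR('f) ^ k" using k F_card by (simp add: power2_eq_square)
  then obtain i where "q = CHAR('f) ^ i" using prime_power_mult_nat[OF CHAR_prime_ff] by blast
  then show ?thesis by (rule freshmans_dream'[OF CHAR_prime_ff])
qed

lemma psi_diff: "(x - y :: 'f) ^ q = x ^ q - y ^ q"
  using psi_add[of "x - y" y] by (simp add: eq_diff_eq)

lemma fixed_K0: assumes "p (\<sigma> a) = p a" shows "(p a) ^ q = p a"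
proof (rule ccontr)
  let ?x = "p a"
  assume nr: "?x ^ q \<noteq> ?x"
  let ?f = "\<lambda>(b, c). b + c * ?x"
  have inj: "inj_on ?f (K0 \<times> K0)"
  proof (rule inj_onI)
    fix u v assume u: "u \<in> K0 \<times> K0" and v: "v \<in> K0 \<times> K0" and fuv: "?f u = ?f v"
    obtain b c where bc: "u = (b, c)" by force
    obtain b' c' where bc': "v = (b', c')" by force
    have h: "b \<in> K0" "c \<in> K0" "b' \<in> K0" "c' \<in> K0" "b + c * ?x = b' + c' * ?x"
      using u v fuv bc bc' by auto
    have hb: "b ^ q = b" "b' ^ q = b'" "c ^ q = c" "c' ^ q = c'" using h(1-4) K0_pow by auto
    have "b = b' \<and> c = c'"
    proof (cases "c = c'")
      case True then show ?thesis using h by simp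
    next
      case False
      then have "c' - c \<noteq> 0" by simp
      have "?x = (b - b') / (c' - c)" using h(5) \<open>c' - c \<noteq> 0\<close>
        by (simp add: field_simps)
      then have "?x ^ q = (b ^ q - b' ^ q) / (c' ^ q - c ^ q)"
        by (simp add: power_divide psi_diff)
      also have "\<dots> = ?x" using hb \<open>?x = (b - b') / (c' - c)\<close> by simp
      finally show ?thesis using nr by simp
    qed
    then show "u = v" using bc bc' by simp
  qed
  have "card (?f ` (K0 \<times> K0)) = q * q"
    using card_image[OF inj] R_res_card by (simp add: card_cartesian_product)
  then have "card (?f ` (K0 \<times> K0)) = card (UNIV :: 'f set)" using F_card by (simp add: power2_eq_square)
  then have full: "?f ` (K0 \<times> K0) = UNIV" by (intro card_subset_eq) auto
  have "p (\<sigma> s) = p s" for s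
  proof -
    have "p s \<in> ?f ` (K0 \<times> K0)" using full by simp
    then obtain r1 r2 where r: "\<sigma> r1 = r1" "\<sigma> r2 = r2" "p s = p r1 + p r2 * ?x" by auto
    then have ps: "p s = p (r1 + r2 * a)" by (simp add: p_add p_mult)
    have "p (\<sigma> s) = p (\<sigma> (r1 + r2 * a))" using pwd[OF ps] .
    also have "\<dots> = p r1 + p r2 * p (\<sigma> a)" using r by (simp add: sig_add sig_mult p_add p_mult)
    also have "\<dots> = p s" using r assms by simp
    finally show ?thesis .
  qed
  moreover obtain s where "\<sigma> s - s \<notin> m" using Galois by blast
  then have "p (\<sigma> s - s) \<noteq> 0" using p_ker by blast
  then have "p (\<sigma> s) \<noteq> p s" by (simp add: p_diff)
  ultimately show False by blast
qed

lemma psi_sig: "p (\<sigma> a) = (p a) ^ q"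
proof -
  let ?x = "p a" and ?y = "p (\<sigma> a)"
  have T: "(?x + ?y) ^ q = ?x + ?y"
  proof -
    have "p (\<sigma> (a + \<sigma> a)) = p (a + \<sigma> a)" by (simp add: sig_add sig_sig add.commute)
    from fixed_K0[OF this] show ?thesis by (simp add: p_add)
  qed
  have N: "(?x * ?y) ^ q = ?x * ?y"
  proof -
    have "p (\<sigma> (a * \<sigma> a)) = p (a * \<sigma> a)" by (simp add: sig_mult sig_sig mult.commute)
    from fixed_K0[OF this] show ?thesis by (simp add: p_mult)
  qed
  have "?x * ?x + ?x * ?y = (?x + ?y) * ?x" by (simp add: algebra_simps)
  then have "(?x * ?x + ?x * ?y) ^ q = ((?x + ?y) * ?x) ^ q" by simp
  moreover have "(?x * ?x + ?x * ?y) ^ q = ?x ^ q * ?x ^ q + ?x * ?y"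
    using psi_add[of "?x * ?x" "?x * ?y"] N by (simp add: power_mult_distrib)
  moreover have "((?x + ?y) * ?x) ^ q = (?x + ?y) * ?x ^ q"
    using T by (simp add: power_mult_distrib)
  ultimately have "?x ^ q * ?x ^ q + ?x * ?y = (?x + ?y) * ?x ^ q" by simp
  then have "(?x ^ q - ?x) * (?x ^ q - ?y) = 0" by (simp add: algebra_simps)
  then have "?x ^ q = ?x \<or> ?x ^ q = ?y" by simp
  then show ?thesis
  proof
    assume xx: "?x ^ q = ?x"
    then have "?x \<in> K0" using roots_eq by blast
    then obtain r where r: "\<sigma> r = r" "?x = p r" by auto
    have "?y = p (\<sigma> r)" using pwd[OF r(2)] .
    then show ?thesis using r xx by simp
  qed simp
qed

end

lemma qa_code_dl': "qa_code dl d = {(u, conv u d) | u. True}"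
  unfolding qa_code_def by (simp add: conv_dl_right)

theorem theorem4p2:
  fixes \<sigma> :: "'s::{comm_ring_1,finite} \<Rightarrow> 's"
    and m :: "'s set"
    and p :: "'s \<Rightarrow> 'f::{field,finite}"
    and q :: nat
    and d :: "'g::{ab_group_add,finite} \<Rightarrow> 's"
  defines "R \<equiv> {r. \<sigma> r = r}"
  assumes S_chain: "chain_ring_on (UNIV :: 's set)"
    and R_chain: "chain_ring_on R"
    and m_max: "maximal_ideal_in UNIV m"
    and Aut: "Aut_over R = {id, \<sigma>}" and sigma_nontriv: "\<sigma> \<noteq> id"
    and Galois: "\<exists>s. \<sigma> s - s \<notin> m"
    and p_hom: "ring_hom_fun p" and p_surj: "surj p"
    and p_ker: "\<forall>x. p x = 0 \<longleftrightarrow> x \<in> m"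
    and F_card: "card (UNIV :: 'f set) = q ^ 2"
    and R_res_card: "card (p ` R) = q"
    and G_odd: "odd (card (UNIV :: 'g set))"
    and G_coprime: "coprime (card (UNIV :: 'g set)) q"
  shows "herm_LCD \<sigma> (qa_code (\<lambda>g. if g = 0 then 1 else 0) d) \<longleftrightarrow>
           (red_pair p ` qa_code (\<lambda>g. if g = 0 then 1 else 0) d
              = qa_code (\<lambda>g. if g = 0 then 1 else 0) (p \<circ> d)
            \<and> herm_LCD (\<lambda>x. x ^ q) (qa_code (\<lambda>g. if g = 0 then 1 else 0) (p \<circ> d)))"
proof -
  interpret setting \<sigma> m p q
    using S_chain m_max Aut sigma_nontriv Galois p_hom p_surj p_ker F_card R_res_card
    unfolding R_def by unfold_locales auto
  interpret sI: invol \<sigma>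
    by unfold_locales (auto simp: sig_add sig_mult sig_sig)
  have qq: "(x ^ q) ^ q = x" for x :: 'f
  proof -
    have "x ^ card (UNIV :: 'f set) = x" by (rule fld_pow_card) auto
    then show ?thesis using F_card by (simp add: power_mult[symmetric] power2_eq_square)
  qed
  interpret fI: invol "\<lambda>x::'f. x ^ q"
    by unfold_locales (auto simp: psi_add power_mult_distrib qq)
  have pconv: "p \<circ> conv u v = conv (p \<circ> u) (p \<circ> v)" for u v :: "'g \<Rightarrow> 's"
    by (rule conv_hom) (auto simp: p_add p_mult)
  have A: "red_pair p ` qa_code dl d = qa_code dl (p \<circ> d)"
  proof
    show "red_pair p ` qa_code dl d \<subseteq> qa_code dl (p \<circ> d)"
      unfolding qa_code_dl' red_pair_def by (auto simp: pconv)
    show "qa_code dl (p \<circ> d) \<subseteq> red_pair p ` qa_code dl d"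
    proof
      fix x assume "x \<in> qa_code dl (p \<circ> d)"
      then obtain v where x: "x = (v, conv v (p \<circ> d))" unfolding qa_code_dl' by blast
      define u where "u = (\<lambda>g. inv p (v g))"
      have pu: "p \<circ> u = v" unfolding u_def comp_def by (simp add: surj_f_inv_f[OF p_surj])
      have "red_pair p (u, conv u d) = x" unfolding red_pair_def x by (simp add: pconv pu)
      then show "x \<in> red_pair p ` qa_code dl d" unfolding qa_code_dl' by blast
    qed
  qed
  define E where "E = (\<lambda>g. dl g + conv d (adj \<sigma> d) g)"
  define EF where "EF = (\<lambda>g. dl g + conv (p \<circ> d) (adj (\<lambda>x::'f. x ^ q) (p \<circ> d)) g)"
  have pE: "p \<circ> E = EF"
  proof -
    have "p \<circ> adj \<sigma> d = adj (\<lambda>x::'f. x ^ q) (p \<circ> d)"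
      unfolding adj_def comp_def by (simp add: psi_sig)
    then have "p \<circ> conv d (adj \<sigma> d) = conv (p \<circ> d) (adj (\<lambda>x::'f. x ^ q) (p \<circ> d))"
      by (simp add: pconv)
    then show ?thesis unfolding E_def EF_def comp_def
      by (auto simp: fun_eq_iff p_add p_0 p_1)
  qed
  have pdl: "p \<circ> (dl :: 'g \<Rightarrow> 's) = dl" by (auto simp: fun_eq_iff p_0 p_1)
  have L: "herm_LCD \<sigma> (qa_code dl d) \<longleftrightarrow> (\<exists>w. conv E w = dl)"
    unfolding sI.LCD_iff E_def by (rule inj_unit_iff)
  have RF: "herm_LCD (\<lambda>x::'f. x ^ q) (qa_code dl (p \<circ> d)) \<longleftrightarrow> (\<exists>w. conv EF w = dl)"
    unfolding fI.LCD_iff EF_def by (rule inj_unit_iff)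
  have main: "(\<exists>w. conv E w = dl) \<longleftrightarrow> (\<exists>w. conv EF w = dl)"
  proof
    assume "\<exists>w. conv E w = dl"
    then obtain w where "conv E w = dl" by blast
    then have "p \<circ> conv E w = p \<circ> dl" by simp
    then have "conv EF (p \<circ> w) = dl" by (simp add: pconv pE pdl)
    then show "\<exists>w. conv EF w = dl" by blast
  next
    assume "\<exists>w. conv EF w = dl"
    then obtain w1 where w1: "conv EF w1 = dl" by blast
    define w where "w = (\<lambda>g. inv p (w1 g))"
    have pw: "p \<circ> w = w1" unfolding w_def comp_def by (simp add: surj_f_inv_f[OF p_surj])
    have pEw: "p \<circ> conv E w = dl" using w1 by (simp add: pconv pE pw)
    define z where "z = (\<lambda>g. dl g - conv E w g)"
    have "\<forall>g. z g \<in> m"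
    proof
      fix g
      have "p (z g) = 0" using fun_cong[OF pEw, of g] fun_cong[OF pdl, of g]
        by (simp add: z_def p_diff)
      then show "z g \<in> m" using p_ker by blast
    qed
    then obtain K where K: "cpow z K = (\<lambda>_. 0)" using coeff_m_nilpotent by blast
    have Ew: "conv E w = (\<lambda>g. dl g - z g)" by (simp add: z_def)
    have "\<forall>v. conv v E = (\<lambda>_. 0) \<longrightarrow> v = (\<lambda>_. 0)"
    proof (intro allI impI)
      fix v assume v: "conv v E = (\<lambda>_. 0)"
      have "conv v (conv E w) = (\<lambda>_. 0)" using v by (simp flip: conv_assoc add: conv_zero_left)
      then have "(\<lambda>g. v g - conv v z g) = (\<lambda>_. 0)"
        by (simp add: Ew conv_diff_right conv_dl_right)
      then have "v = conv v z" by (auto simp: fun_eq_iff)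
      then have "v = conv v (cpow z K)" by (rule cpow_fix)
      then show "v = (\<lambda>_. 0)" using K by (simp add: conv_zero_right)
    qed
    then show "\<exists>w. conv E w = dl" using inj_unit_iff by blast
  qed
  show ?thesis using A L RF main by simp
qed

end
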